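(* Let $a=\sum_{t=0}^7a_te_t\in C\ell_{1,2}$ and let $\mathbf{i}=\sqrt{-1}\in\mathbb{C}$. The (complex) eigenvalues of $L(a)$ are $$\lambda_{1,2}=a_0+a_7\mathbf{i}\pm\sqrt{(a_0+a_7\mathbf{i})^2-N(a)-2T(a)\mathbf{i}},\qquad \lambda_{3,4}=a_0-a_7\mathbf{i}\pm\sqrt{(a_0-a_7\mathbf{i})^2-N(a)+2T(a)\mathbf{i}},$$ and each eigenvalue occurs with algebraic multiplicity $2$.
   Context: $C\ell_{1,2}$ is the real Clifford algebra generated by $i_1,i_2,i_3$ with $i_1^2=1$, $i_2^2=i_3^2=-1$ and $i_ti_m=-i_mi_t$ for $t\neq m$, with real basis $e_0=1$, $e_1=i_1$, $e_2=i_2$, $e_3=i_1i_2$, $e_4=i_3$, $e_5=i_1i_3$, $e_6=i_2i_3$, $e_7=i_1i_2i_3$. For $x=\sum_{t=0}^7x_te_t$ write $\overrightarrow{x}=(x_0,\dots,x_7)^T\in\mathbb{R}^8$. For $a\in C\ell_{1,2}$, $L(a)$ is the real $8\times8$ matrix with $\overrightarrow{ax}=L(a)\overrightarrow{x}$ for all $x$. For $a=\sum a_te_t$: $N(a)=a_0^2-a_1^2+a_2^2-a_3^2+a_4^2-a_5^2+a_6^2-a_7^2$ and $T(a)=a_0a_7+a_2a_5-a_1a_6-a_3a_4$. *)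

theory Defs
  imports Complex_Main "Jordan_Normal_Form.Char_Poly"
begin

(* Elements of Cl_{1,2} are represented by coefficient functions x :: nat => real,
   x = sum_{t<8} x t * e_t (values at indices >= 8 are ignored).
   Index t = b1 + 2*b2 + 4*b3 (bits b_k in {0,1}) encodes the basis monomial
   e_t = i1^b1 * i2^b2 * i3^b3; this matches e_0=1, e_1=i1, e_2=i2, e_3=i1i2,
   e_4=i3, e_5=i1i3, e_6=i2i3, e_7=i1i2i3. *)

definition cl_bit :: "nat \<Rightarrow> nat \<Rightarrow> nat" where
  "cl_bit k t = (t div 2 ^ k) mod 2"

definition cl_idx :: "nat \<Rightarrow> nat \<Rightarrow> nat" where
  "cl_idx s t = (cl_bit 0 s + cl_bit 0 t) mod 2 + 2 * ((cl_bit 1 s + cl_bit 1 t) mod 2)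
                 + 4 * ((cl_bit 2 s + cl_bit 2 t) mod 2)"

(* sign in e_s * e_t = cl_sign s t * e_(cl_idx s t): anticommuting i1,i2,i3 past each other,
   then i1^2 = 1, i2^2 = -1, i3^2 = -1 *)
definition cl_sign :: "nat \<Rightarrow> nat \<Rightarrow> real" where
  "cl_sign s t = (-1) ^ (cl_bit 0 t * cl_bit 1 s + cl_bit 0 t * cl_bit 2 s + cl_bit 1 t * cl_bit 2 s
                        + cl_bit 1 s * cl_bit 1 t + cl_bit 2 s * cl_bit 2 t)"

definition cl_mult :: "(nat \<Rightarrow> real) \<Rightarrow> (nat \<Rightarrow> real) \<Rightarrow> (nat \<Rightarrow> real)" where
  "cl_mult x y = (\<lambda>k. \<Sum>s<8. \<Sum>t<8. if cl_idx s t = k then cl_sign s t * x s * y t else 0)"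

definition cl_basis :: "nat \<Rightarrow> (nat \<Rightarrow> real)" where
  "cl_basis t = (\<lambda>k. if k = t then 1 else 0)"

definition L_mat :: "(nat \<Rightarrow> real) \<Rightarrow> real mat" where
  "L_mat a = mat 8 8 (\<lambda>(k, t). cl_mult a (cl_basis t) k)"

definition cl_N :: "(nat \<Rightarrow> real) \<Rightarrow> real" where
  "cl_N a = (a 0)\<^sup>2 - (a 1)\<^sup>2 + (a 2)\<^sup>2 - (a 3)\<^sup>2 + (a 4)\<^sup>2 - (a 5)\<^sup>2 + (a 6)\<^sup>2 - (a 7)\<^sup>2"

definition cl_T :: "(nat \<Rightarrow> real) \<Rightarrow> real" where
  "cl_T a = a 0 * a 7 + a 2 * a 5 - a 1 * a 6 - a 3 * a 4"

end

theory Submission imports Defs begin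

lemma sum8: "(\<Sum>s<(8::nat). f s) = f 0 + f 1 + f 2 + f 3 + f 4 + f 5 + f 6 + (f 7 :: 'a::comm_monoid_add)"
  by (simp add: eval_nat_numeral add.assoc add.commute add.left_commute)

lemma sum8': "(\<Sum>s\<in>{0..<(8::nat)}. f s) = f 0 + f 1 + f 2 + f 3 + f 4 + f 5 + f 6 + (f 7 :: 'a::comm_monoid_add)"
  using sum8 by (simp add: atLeast0LessThan)

lemma less8: "(i::nat) < 8 \<Longrightarrow> i = 0 \<or> i = 1 \<or> i = 2 \<or> i = 3 \<or> i = 4 \<or> i = 5 \<or> i = 6 \<or> i = 7"
  by auto

lemma all8: "(\<forall>i<(8::nat). P i) = (P 0 \<and> P 1 \<and> P 2 \<and> P 3 \<and> P 4 \<and> P 5 \<and> P 6 \<and> P 7)"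
  by (auto dest!: less8)

lemma mat8_eqI: "A \<in> carrier_mat 8 8 \<Longrightarrow> B \<in> carrier_mat 8 8 \<Longrightarrow>
   (\<forall>i<8. \<forall>j<8. A $$ (i,j) = B $$ (i,j)) \<Longrightarrow> A = B"
  by (rule eq_matI) auto

definition Lexp :: "(nat \<Rightarrow> real) \<Rightarrow> real mat" where
  "Lexp a = mat_of_rows_list 8 [[a 0, a 1, - a 2, a 3, - a 4, a 5, - a 6, - a 7],
    [a 1, a 0, - a 3, a 2, - a 5, a 4, - a 7, - a 6],
    [a 2, - a 3, a 0, a 1, - a 6, - a 7, a 4, - a 5],
    [a 3, - a 2, a 1, a 0, - a 7, - a 6, a 5, - a 4],
    [a 4, - a 5, a 6, a 7, a 0, a 1, - a 2, a 3],
    [a 5, - a 4, a 7, a 6, a 1, a 0, - a 3, a 2],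
    [a 6, a 7, - a 4, a 5, a 2, - a 3, a 0, a 1],
    [a 7, a 6, - a 5, a 4, a 3, - a 2, a 1, a 0]]"

definition P2 :: "complex mat" where
  "P2 = mat_of_rows_list 8 [[1, 0, 1, 0, 1, 0, 1, 0],
    [1, 0, 1, 0, - 1, 0, - 1, 0],
    [0, 1, 0, 1, 0, 1, 0, 1],
    [0, - 1, 0, - 1, 0, 1, 0, 1],
    [0, \<i>, 0, - \<i>, 0, - \<i>, 0, \<i>],
    [0, - \<i>, 0, \<i>, 0, - \<i>, 0, \<i>],
    [- \<i>, 0, \<i>, 0, \<i>, 0, - \<i>, 0],
    [- \<i>, 0, \<i>, 0, - \<i>, 0, \<i>, 0]]"

definition Q2 :: "complex mat" where
  "Q2 = mat_of_rows_list 8 [[1 / 4, 1 / 4, 0, 0, 0, 0, \<i> / 4, \<i> / 4],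
    [0, 0, 1 / 4, - 1 / 4, - \<i> / 4, \<i> / 4, 0, 0],
    [1 / 4, 1 / 4, 0, 0, 0, 0, - \<i> / 4, - \<i> / 4],
    [0, 0, 1 / 4, - 1 / 4, \<i> / 4, - \<i> / 4, 0, 0],
    [1 / 4, - 1 / 4, 0, 0, 0, 0, - \<i> / 4, \<i> / 4],
    [0, 0, 1 / 4, 1 / 4, \<i> / 4, \<i> / 4, 0, 0],
    [1 / 4, - 1 / 4, 0, 0, 0, 0, \<i> / 4, - \<i> / 4],
    [0, 0, 1 / 4, 1 / 4, - \<i> / 4, - \<i> / 4, 0, 0]]"

definition Dm :: "(nat \<Rightarrow> real) \<Rightarrow> complex mat" where
  "Dm a = (let c = (\<lambda>k. complex_of_real (a k)) in mat_of_rows_list 8 [[c 0 + c 1 + \<i> * (c 6 + c 7), - (c 2 + c 3) - \<i> * (c 4 + c 5), 0, 0, 0, 0, 0, 0],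
    [c 2 - c 3 + \<i> * (c 5 - c 4), c 0 - c 1 + \<i> * (c 7 - c 6), 0, 0, 0, 0, 0, 0],
    [0, 0, c 0 + c 1 - \<i> * (c 6 + c 7), - (c 2 + c 3) + \<i> * (c 4 + c 5), 0, 0, 0, 0],
    [0, 0, c 2 - c 3 + \<i> * (c 4 - c 5), c 0 - c 1 + \<i> * (c 6 - c 7), 0, 0, 0, 0],
    [0, 0, 0, 0, c 0 - c 1 + \<i> * (c 7 - c 6), c 3 - c 2 + \<i> * (c 4 - c 5), 0, 0],
    [0, 0, 0, 0, c 2 + c 3 + \<i> * (c 4 + c 5), c 0 + c 1 + \<i> * (c 6 + c 7), 0, 0],
    [0, 0, 0, 0, 0, 0, c 0 - c 1 + \<i> * (c 6 - c 7), c 3 - c 2 + \<i> * (c 5 - c 4)],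
    [0, 0, 0, 0, 0, 0, c 2 + c 3 - \<i> * (c 4 + c 5), c 0 + c 1 - \<i> * (c 6 + c 7)]])"

definition B1 :: "(nat \<Rightarrow> real) \<Rightarrow> complex mat" where
  "B1 a = (let c = (\<lambda>k. complex_of_real (a k)) in mat_of_rows_list 2 [[c 0 + c 1 + \<i> * (c 6 + c 7), - (c 2 + c 3) - \<i> * (c 4 + c 5)], [c 2 - c 3 + \<i> * (c 5 - c 4), c 0 - c 1 + \<i> * (c 7 - c 6)]])"

definition B2 :: "(nat \<Rightarrow> real) \<Rightarrow> complex mat" where
  "B2 a = (let c = (\<lambda>k. complex_of_real (a k)) in mat_of_rows_list 2 [[c 0 + c 1 - \<i> * (c 6 + c 7), - (c 2 + c 3) + \<i> * (c 4 + c 5)], [c 2 - c 3 + \<i> * (c 4 - c 5), c 0 - c 1 + \<i> * (c 6 - c 7)]])"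

definition B3 :: "(nat \<Rightarrow> real) \<Rightarrow> complex mat" where
  "B3 a = (let c = (\<lambda>k. complex_of_real (a k)) in mat_of_rows_list 2 [[c 0 - c 1 + \<i> * (c 7 - c 6), c 3 - c 2 + \<i> * (c 4 - c 5)], [c 2 + c 3 + \<i> * (c 4 + c 5), c 0 + c 1 + \<i> * (c 6 + c 7)]])"

definition B4 :: "(nat \<Rightarrow> real) \<Rightarrow> complex mat" where
  "B4 a = (let c = (\<lambda>k. complex_of_real (a k)) in mat_of_rows_list 2 [[c 0 - c 1 + \<i> * (c 6 - c 7), c 3 - c 2 + \<i> * (c 5 - c 4)], [c 2 + c 3 - \<i> * (c 4 + c 5), c 0 + c 1 - \<i> * (c 6 + c 7)]])"

lemma mor_carrier: "length rs = m \<Longrightarrow> mat_of_rows_list n rs \<in> carrier_mat m n"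
  by (simp add: mat_of_rows_list_def)

lemma Lexp_car: "Lexp a \<in> carrier_mat 8 8"
  by (simp add: Lexp_def mor_carrier)
lemma P2_car: "P2 \<in> carrier_mat 8 8"
  by (simp add: P2_def mor_carrier)
lemma Q2_car: "Q2 \<in> carrier_mat 8 8"
  by (simp add: Q2_def mor_carrier)
lemma Dm_car: "Dm a \<in> carrier_mat 8 8"
  by (simp add: Dm_def mor_carrier)
lemma B1_car: "B1 a \<in> carrier_mat 2 2"
  by (simp add: B1_def mor_carrier)
lemma B2_car: "B2 a \<in> carrier_mat 2 2"
  by (simp add: B2_def mor_carrier)
lemma B3_car: "B3 a \<in> carrier_mat 2 2"
  by (simp add: B3_def mor_carrier)
lemma B4_car: "B4 a \<in> carrier_mat 2 2"
  by (simp add: B4_def mor_carrier)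

lemma L_Lexp: "L_mat a = Lexp a"
  apply (rule mat8_eqI)
    apply (simp add: L_mat_def)
   apply (rule Lexp_car)
  unfolding all8
  by (simp add: Lexp_def mat_of_rows_list_def L_mat_def cl_mult_def cl_basis_def cl_idx_def cl_sign_def cl_bit_def sum8)

lemma PQ: "P2 * Q2 = 1\<^sub>m 8"
  apply (rule mat8_eqI)
    apply (rule mult_carrier_mat[OF P2_car Q2_car])
   apply simp
  unfolding all8
  by (simp add: P2_def Q2_def mat_of_rows_list_def scalar_prod_def sum8')

lemma QP: "Q2 * P2 = 1\<^sub>m 8"
  apply (rule mat8_eqI)
    apply (rule mult_carrier_mat[OF Q2_car P2_car])
   apply simp
  unfolding all8
  by (simp add: P2_def Q2_def mat_of_rows_list_def scalar_prod_def sum8')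

lemma LP: "map_mat complex_of_real (Lexp a) * P2 = P2 * Dm a"
  apply (rule mat8_eqI)
    apply (rule mult_carrier_mat[OF _ P2_car], simp add: Lexp_car)
   apply (rule mult_carrier_mat[OF P2_car Dm_car])
  unfolding all8
  by (simp add: P2_def Dm_def Lexp_def mat_of_rows_list_def scalar_prod_def sum8' complex_eq_iff)

lemma D_blocks: "Dm a = four_block_mat (four_block_mat (B1 a) (0\<^sub>m 2 2) (0\<^sub>m 2 2) (B2 a)) (0\<^sub>m 4 4) (0\<^sub>m 4 4)
    (four_block_mat (B3 a) (0\<^sub>m 2 2) (0\<^sub>m 2 2) (B4 a))"
  apply (rule mat8_eqI)
    apply (rule Dm_car)
  using B1_car[of a] B2_car[of a] B3_car[of a] B4_car[of a] apply (simp add: four_block_mat_def)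
  unfolding all8
  by (simp add: Dm_def B1_def B2_def B3_def B4_def four_block_mat_def mat_of_rows_list_def)

lemma det2: assumes "A \<in> carrier_mat 2 2"
  shows "det A = A$$(0,0) * A$$(1,1) - A$$(0,1) * A$$(1,0)"
  using assms
  apply (subst laplace_expansion_row[OF assms, of 0])
   apply (simp_all add: cofactor_def numeral_eq_Suc lessThan_Suc)
  apply (subst det_single; simp add: mat_delete_def)+
  done

lemma cp2: assumes A: "(A :: 'a :: comm_ring_1 mat) \<in> carrier_mat 2 2"
  shows "char_poly A = [: A$$(0,0) * A$$(1,1) - A$$(0,1) * A$$(1,0), - (A$$(0,0) + A$$(1,1)), 1 :]"
proof -
  have "char_poly A = det (char_poly_matrix A)" by (simp add: char_poly_def)
  also have "\<dots> = [:- A$$(0,0), 1:] * [:- A$$(1,1), 1:] - [:- A$$(0,1):] * [:- A$$(1,0):]"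
    using A by (subst det2) (auto simp: char_poly_matrix_def)
  also have "\<dots> = [: A$$(0,0) * A$$(1,1) - A$$(0,1) * A$$(1,0), - (A$$(0,0) + A$$(1,1)), 1 :]"
    by (simp add: algebra_simps)
  finally show ?thesis .
qed

lemma cp_block: assumes A: "(A :: 'a :: idom mat) \<in> carrier_mat n n" and B: "B \<in> carrier_mat m m"
  shows "char_poly (four_block_mat A (0\<^sub>m n m) (0\<^sub>m m n) B) = char_poly A * char_poly B"
proof -
  have "char_poly_matrix (four_block_mat A (0\<^sub>m n m) (0\<^sub>m m n) B)
     = four_block_mat (char_poly_matrix A) (0\<^sub>m n m) (0\<^sub>m m n) (char_poly_matrix B)"
    using A B by (intro eq_matI) (auto simp: char_poly_matrix_def)
  then show ?thesis unfolding char_poly_def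
    by (simp add: det_four_block_mat_lower_left_zero[OF char_poly_matrix_closed[OF A] _ _ char_poly_matrix_closed[OF B]])
qed


lemma quad: "[:- (w + r), 1:] * [:- (w - r), 1:] = [: w^2 - r^2, - 2 * w, (1::complex) :]"
  by (simp add: algebra_simps power2_eq_square)

lemma cpB1: "char_poly (B1 a) = [: of_real (cl_N a) + 2 * of_real (cl_T a) * \<i>, - 2 * Complex (a 0) (a 7), 1 :]"
  unfolding cp2[OF B1_car] by (simp add: B1_def mat_of_rows_list_def complex_eq_iff cl_N_def cl_T_def power2_eq_square algebra_simps)
lemma cpB3: "char_poly (B3 a) = [: of_real (cl_N a) + 2 * of_real (cl_T a) * \<i>, - 2 * Complex (a 0) (a 7), 1 :]"
  unfolding cp2[OF B3_car] by (simp add: B3_def mat_of_rows_list_def complex_eq_iff cl_N_def cl_T_def power2_eq_square algebra_simps)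
lemma cpB2: "char_poly (B2 a) = [: of_real (cl_N a) - 2 * of_real (cl_T a) * \<i>, - 2 * Complex (a 0) (- a 7), 1 :]"
  unfolding cp2[OF B2_car] by (simp add: B2_def mat_of_rows_list_def complex_eq_iff cl_N_def cl_T_def power2_eq_square algebra_simps)
lemma cpB4: "char_poly (B4 a) = [: of_real (cl_N a) - 2 * of_real (cl_T a) * \<i>, - 2 * Complex (a 0) (- a 7), 1 :]"
  unfolding cp2[OF B4_car] by (simp add: B4_def mat_of_rows_list_def complex_eq_iff cl_N_def cl_T_def power2_eq_square algebra_simps)

lemma sim: "similar_mat (map_mat complex_of_real (L_mat a)) (Dm a)"
proof -
  let ?L = "map_mat complex_of_real (Lexp a)"
  have Lc: "?L \<in> carrier_mat 8 8" using Lexp_car by simp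
  have "?L = ?L * 1\<^sub>m 8" using Lc by simp
  also have "\<dots> = ?L * (P2 * Q2)" by (simp add: PQ)
  also have "\<dots> = (?L * P2) * Q2" using Lc P2_car Q2_car by (simp add: assoc_mult_mat)
  also have "\<dots> = P2 * Dm a * Q2" by (simp add: LP)
  finally have eq: "?L = P2 * Dm a * Q2" .
  show ?thesis unfolding similar_mat_def similar_mat_wit_def L_Lexp
    apply (rule exI[of _ P2], rule exI[of _ Q2])
    using Lc P2_car Q2_car Dm_car[of a] eq PQ QP by (simp add: Let_def)
qed

lemma cpD: "char_poly (Dm a) = char_poly (B1 a) * char_poly (B2 a) * (char_poly (B3 a) * char_poly (B4 a))"
proof -
  have c1: "four_block_mat (B1 a) (0\<^sub>m 2 2) (0\<^sub>m 2 2) (B2 a) \<in> carrier_mat 4 4"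
    using four_block_carrier_mat[OF B1_car B2_car] by simp
  have c2: "four_block_mat (B3 a) (0\<^sub>m 2 2) (0\<^sub>m 2 2) (B4 a) \<in> carrier_mat 4 4"
    using four_block_carrier_mat[OF B3_car B4_car] by simp
  show ?thesis
    unfolding D_blocks cp_block[OF c1 c2] cp_block[OF B1_car B2_car] cp_block[OF B3_car B4_car] ..
qed

theorem proposition2p5:
  fixes a :: "nat \<Rightarrow> real"
  shows "let w1 = Complex (a 0) (a 7); w2 = Complex (a 0) (- a 7);
             r1 = csqrt (w1\<^sup>2 - of_real (cl_N a) - 2 * of_real (cl_T a) * \<i>);
             r2 = csqrt (w2\<^sup>2 - of_real (cl_N a) + 2 * of_real (cl_T a) * \<i>);
             l1 = w1 + r1; l2 = w1 - r1; l3 = w2 + r2; l4 = w2 - r2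
         in char_poly (map_mat complex_of_real (L_mat a))
              = ([:- l1, 1:] * [:- l2, 1:] * [:- l3, 1:] * [:- l4, 1:]) ^ 2"
proof -
  define w1 where "w1 = Complex (a 0) (a 7)"
  define w2 where "w2 = Complex (a 0) (- a 7)"
  define r1 where "r1 = csqrt (w1\<^sup>2 - of_real (cl_N a) - 2 * of_real (cl_T a) * \<i>)"
  define r2 where "r2 = csqrt (w2\<^sup>2 - of_real (cl_N a) + 2 * of_real (cl_T a) * \<i>)"
  have q1: "[:- (w1 + r1), 1:] * [:- (w1 - r1), 1:] = char_poly (B1 a)"
    unfolding quad cpB1 r1_def power2_csqrt w1_def by simp
  have q3: "[:- (w1 + r1), 1:] * [:- (w1 - r1), 1:] = char_poly (B3 a)"
    unfolding quad cpB3 r1_def power2_csqrt w1_def by simp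
  have q2: "[:- (w2 + r2), 1:] * [:- (w2 - r2), 1:] = char_poly (B2 a)"
    unfolding quad cpB2 r2_def power2_csqrt w2_def by simp
  have q4: "[:- (w2 + r2), 1:] * [:- (w2 - r2), 1:] = char_poly (B4 a)"
    unfolding quad cpB4 r2_def power2_csqrt w2_def by simp
  have "char_poly (map_mat complex_of_real (L_mat a))
      = ([:- (w1 + r1), 1:] * [:- (w1 - r1), 1:] * [:- (w2 + r2), 1:] * [:- (w2 - r2), 1:]) ^ 2"
    unfolding char_poly_similar[OF sim] cpD q1[symmetric] q2[symmetric] q3[symmetric] q4[symmetric]
    by (simp add: power2_eq_square algebra_simps)
  then show ?thesis unfolding Let_def w1_def w2_def r1_def r2_def .
qed

end
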